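(* For every $n\in\mathbb N$, let $z_n$ be the solution of $z_n'(t)=-n^2\int_0^tN(t-s)z_n(s)\,ds$, $z_n(0)=1$. Then $|z_n(t)|\le 1$ for every $n\in\mathbb N$ and every $t>0$.
   Context: $N:(0,+\infty)\to\mathbb R$ satisfies $N\in L^1(0,T)$ for every $T>0$, and its Laplace transform $\hat N(\lambda)$ is defined and holomorphic on $\Pi_0=\{\operatorname{Re}\lambda>0\}$ and maps $\Pi_0$ into itself (positive real function). *)

theory Defs
  imports "HOL-Analysis.Analysis"
begin

definition laplace :: "(real \<Rightarrow> real) \<Rightarrow> complex \<Rightarrow> complex" where
  "laplace N z = integral {0<..} (\<lambda>t. exp (- z * complex_of_real t) * complex_of_real (N t))"

end

theory Submission
  imports Defs
begin


locale kset =
  fixes T :: real and y :: "real \<Rightarrow> real" and M :: "real \<Rightarrow> real"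
  assumes Tpos: "T > 0" and ycont: "continuous_on {0..T} y"
    and Mabs: "M absolutely_integrable_on {0<..}"
    and Mpos: "\<And>\<theta>. integral {0<..} (\<lambda>x. M x * cos (\<theta> * x)) \<ge> 0"
begin

lemma Mprod:
  assumes "continuous_on UNIV g" "bounded (range g)"
  shows "(\<lambda>x. M x * g x) absolutely_integrable_on {0<..}"
proof -
  have "(\<lambda>x. g x * M x) absolutely_integrable_on {0<..}"
    apply (rule absolutely_integrable_bounded_measurable_product_real)
    using assms Mabs
    by (auto intro!: continuous_imp_measurable_on_sets_lebesgue intro: continuous_on_subset
          bounded_subset[OF assms(2)])
  then show ?thesis by (simp add: mult.commute)
qed

lemma Mprod_int:
  assumes "continuous_on UNIV g" "bounded (range g)"
  shows "(\<lambda>x. M x * g x) integrable_on {0<..}"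
  using Mprod[OF assms] set_lebesgue_integral_eq_integral(1) absolutely_integrable_on_def by blast

lemma yprod:
  assumes "continuous_on UNIV g"
  shows "(\<lambda>s. y s * g s) integrable_on {0..T}"
  by (rule integrable_continuous_interval)
     (intro continuous_intros ycont continuous_on_subset[OF assms], auto)

definition "By = Sup ((\<lambda>s. \<bar>y s\<bar>) ` {0..T})"

lemma By_bound: assumes "s \<in> {0..T}" shows "\<bar>y s\<bar> \<le> By"
proof -
  have "compact ((\<lambda>s. \<bar>y s\<bar>) ` {0..T})"
    by (intro compact_continuous_image continuous_intros ycont) auto
  then have "bdd_above ((\<lambda>s. \<bar>y s\<bar>) ` {0..T})" by (intro bounded_imp_bdd_above compact_imp_bounded)
  then show ?thesis unfolding By_def using assms by (intro cSup_upper) auto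
qed

lemma By_nonneg: "By \<ge> 0"
  using By_bound[of 0] Tpos by force

definition "Fk f u = integral {0..T} (\<lambda>s. y s * f (u - s))"
definition "Ek f t = integral {0<..} (\<lambda>x. M x * Fk f (t - x))"
definition "Jk f = integral {0..T} (\<lambda>t. y t * Ek f t)"
definition "Good f \<longleftrightarrow> continuous_on UNIV f \<and> bounded (range f) \<and> continuous_on UNIV (Fk f)
   \<and> bounded (range (Fk f)) \<and> continuous_on UNIV (Ek f) \<and> Jk f \<ge> 0"

definition "Cc \<theta> = integral {0..T} (\<lambda>s. y s * cos (\<theta> * s))"
definition "Sc \<theta> = integral {0..T} (\<lambda>s. y s * sin (\<theta> * s))"
definition "Ac \<theta> = integral {0<..} (\<lambda>x. M x * cos (\<theta> * x))"
definition "Bc \<theta> = integral {0<..} (\<lambda>x. M x * sin (\<theta> * x))"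

lemma bounded_cos: "bounded (range (\<lambda>x. cos (a * x) :: real))"
  by (rule boundedI[of _ 1]) auto
lemma bounded_sin: "bounded (range (\<lambda>x. sin (a * x) :: real))"
  by (rule boundedI[of _ 1]) auto

lemma Fk_cos: "Fk (\<lambda>v. cos (\<theta> * v)) u = cos (\<theta> * u) * Cc \<theta> + sin (\<theta> * u) * Sc \<theta>"
proof -
  have i1: "(\<lambda>s. y s * cos (\<theta> * s)) integrable_on {0..T}"
    by (rule yprod) (intro continuous_intros)
  have i2: "(\<lambda>s. y s * sin (\<theta> * s)) integrable_on {0..T}"
    by (rule yprod) (intro continuous_intros)
  have "(\<lambda>s. y s * cos (\<theta> * (u - s))) = (\<lambda>s. cos (\<theta> * u) * (y s * cos (\<theta> * s)) + sin (\<theta> * u) * (y s * sin (\<theta> * s)))"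
    by (rule ext) (simp add: right_diff_distrib cos_diff algebra_simps)
  then show ?thesis
    unfolding Fk_def Cc_def Sc_def
    using integrable_on_mult_right[OF i1] integrable_on_mult_right[OF i2] by (simp add: integral_add)
qed

lemma Ek_cos: "Ek (\<lambda>v. cos (\<theta> * v)) t =
   (Cc \<theta> * cos (\<theta> * t) + Sc \<theta> * sin (\<theta> * t)) * Ac \<theta> + (Cc \<theta> * sin (\<theta> * t) - Sc \<theta> * cos (\<theta> * t)) * Bc \<theta>"
proof -
  have i1: "(\<lambda>x. M x * cos (\<theta> * x)) integrable_on {0<..}"
    by (rule Mprod_int) (intro continuous_intros bounded_cos)+
  have i2: "(\<lambda>x. M x * sin (\<theta> * x)) integrable_on {0<..}"
    by (rule Mprod_int) (intro continuous_intros bounded_sin)+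
  have "(\<lambda>x. M x * Fk (\<lambda>v. cos (\<theta> * v)) (t - x)) = (\<lambda>x. (Cc \<theta> * cos (\<theta> * t) + Sc \<theta> * sin (\<theta> * t)) * (M x * cos (\<theta> * x))
      + (Cc \<theta> * sin (\<theta> * t) - Sc \<theta> * cos (\<theta> * t)) * (M x * sin (\<theta> * x)))"
    unfolding Fk_cos by (rule ext) (simp add: right_diff_distrib cos_diff sin_diff algebra_simps)
  then show ?thesis
    unfolding Ek_def Ac_def Bc_def
    using integrable_on_mult_right[OF i1] integrable_on_mult_right[OF i2] by (simp add: integral_add)
qed

lemma Jk_cos: "Jk (\<lambda>v. cos (\<theta> * v)) = Ac \<theta> * ((Cc \<theta>)\<^sup>2 + (Sc \<theta>)\<^sup>2)"
proof -
  have i1: "(\<lambda>s. y s * cos (\<theta> * s)) integrable_on {0..T}"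
    by (rule yprod) (intro continuous_intros)
  have i2: "(\<lambda>s. y s * sin (\<theta> * s)) integrable_on {0..T}"
    by (rule yprod) (intro continuous_intros)
  have "(\<lambda>t. y t * Ek (\<lambda>v. cos (\<theta> * v)) t) = (\<lambda>t. (Cc \<theta> * Ac \<theta> - Sc \<theta> * Bc \<theta>) * (y t * cos (\<theta> * t))
      + (Sc \<theta> * Ac \<theta> + Cc \<theta> * Bc \<theta>) * (y t * sin (\<theta> * t)))"
    unfolding Ek_cos by (rule ext) (simp add: algebra_simps)
  then have "Jk (\<lambda>v. cos (\<theta> * v)) = (Cc \<theta> * Ac \<theta> - Sc \<theta> * Bc \<theta>) * Cc \<theta> + (Sc \<theta> * Ac \<theta> + Cc \<theta> * Bc \<theta>) * Sc \<theta>"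
    unfolding Jk_def Cc_def Sc_def
    using integrable_on_mult_right[OF i1] integrable_on_mult_right[OF i2] by (simp add: integral_add)
  then show ?thesis by (simp add: algebra_simps power2_eq_square)
qed

lemma Good_cos: "Good (\<lambda>v. cos (\<theta> * v))"
proof -
  have "Fk (\<lambda>v. cos (\<theta> * v)) = (\<lambda>u. cos (\<theta> * u) * Cc \<theta> + sin (\<theta> * u) * Sc \<theta>)"
    by (rule ext) (simp add: Fk_cos)
  moreover have "Ek (\<lambda>v. cos (\<theta> * v)) = (\<lambda>t. (Cc \<theta> * cos (\<theta> * t) + Sc \<theta> * sin (\<theta> * t)) * Ac \<theta> + (Cc \<theta> * sin (\<theta> * t) - Sc \<theta> * cos (\<theta> * t)) * Bc \<theta>)"
    by (rule ext) (simp add: Ek_cos)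
  moreover have "bounded (range (\<lambda>u. cos (\<theta> * u) * Cc \<theta> + sin (\<theta> * u) * Sc \<theta>))"
  proof (rule boundedI[of _ "\<bar>Cc \<theta>\<bar> + \<bar>Sc \<theta>\<bar>"], clarsimp)
    fix u
    have "\<bar>cos (\<theta> * u) * Cc \<theta>\<bar> \<le> \<bar>Cc \<theta>\<bar>" "\<bar>sin (\<theta> * u) * Sc \<theta>\<bar> \<le> \<bar>Sc \<theta>\<bar>"
      by (auto simp: abs_mult intro!: mult_left_le_one_le)
    then show "\<bar>cos (\<theta> * u) * Cc \<theta> + sin (\<theta> * u) * Sc \<theta>\<bar> \<le> \<bar>Cc \<theta>\<bar> + \<bar>Sc \<theta>\<bar>" by linarith
  qed
  moreover have "Jk (\<lambda>v. cos (\<theta> * v)) \<ge> 0"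
    using Mpos[of \<theta>] by (simp add: Jk_cos Ac_def)
  ultimately show ?thesis unfolding Good_def
    by (auto intro!: continuous_intros bounded_cos)
qed

lemma cont_shift: "continuous_on UNIV (h::real\<Rightarrow>real) \<Longrightarrow> continuous_on UNIV (\<lambda>x. h (a - x))"
proof -
  assume h: "continuous_on UNIV h"
  have "continuous_on UNIV (\<lambda>x::real. a - x)" by (intro continuous_intros)
  then show ?thesis using continuous_on_compose2[OF h] by auto
qed

lemma bounded_range_cmult: "bounded (range (h::real\<Rightarrow>real)) \<Longrightarrow> bounded (range (\<lambda>x. c * h x))"
proof -
  assume "bounded (range h)"
  then obtain B where "\<And>x. \<bar>h x\<bar> \<le> B" by (auto simp: bounded_iff)
  then have "\<And>x. \<bar>c * h x\<bar> \<le> \<bar>c\<bar> * B" by (simp add: abs_mult mult_left_mono)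
  then show ?thesis by (intro boundedI) auto
qed

lemma bounded_shift: "bounded (range (h::real\<Rightarrow>real)) \<Longrightarrow> bounded (range (\<lambda>x. h (a - x)))"
  by (rule bounded_subset) auto

lemma Fk_add: "continuous_on UNIV f \<Longrightarrow> continuous_on UNIV g \<Longrightarrow> Fk (\<lambda>v. f v + g v) u = Fk f u + Fk g u"
  unfolding Fk_def using yprod[OF cont_shift, of f u] yprod[OF cont_shift, of g u]
  by (simp add: distrib_left integral_add)

lemma Fk_scale: "Fk (\<lambda>v. c * f v) u = c * Fk f u"
  unfolding Fk_def by (simp add: algebra_simps)

lemma Ek_add: "continuous_on UNIV f \<Longrightarrow> continuous_on UNIV g \<Longrightarrow> Good f \<Longrightarrow> Good g \<Longrightarrow>
   Ek (\<lambda>v. f v + g v) t = Ek f t + Ek g t"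
proof -
  assume cf: "continuous_on UNIV f" and cg: "continuous_on UNIV g" and gf: "Good f" and gg: "Good g"
  have "(\<lambda>x. M x * Fk f (t - x)) integrable_on {0<..}"
    using gf unfolding Good_def by (intro Mprod_int cont_shift bounded_shift) auto
  moreover have "(\<lambda>x. M x * Fk g (t - x)) integrable_on {0<..}"
    using gg unfolding Good_def by (intro Mprod_int cont_shift bounded_shift) auto
  ultimately show ?thesis
    unfolding Ek_def by (simp add: Fk_add[OF cf cg] distrib_left integral_add)
qed

lemma Ek_scale: "Ek (\<lambda>v. c * f v) t = c * Ek f t"
  unfolding Ek_def Fk_scale by (simp add: algebra_simps)

lemma Good_add: assumes "Good f" "Good g" shows "Good (\<lambda>v. f v + g v)"
proof -
  have cf: "continuous_on UNIV f" and cg: "continuous_on UNIV g" using assms by (auto simp: Good_def)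
  have F: "Fk (\<lambda>v. f v + g v) = (\<lambda>u. Fk f u + Fk g u)" by (rule ext) (simp add: Fk_add cf cg)
  have E: "Ek (\<lambda>v. f v + g v) = (\<lambda>u. Ek f u + Ek g u)" by (rule ext) (simp add: Ek_add cf cg assms)
  have J: "Jk (\<lambda>v. f v + g v) = Jk f + Jk g"
    unfolding Jk_def E using assms yprod[of "Ek f"] yprod[of "Ek g"]
    by (simp add: Good_def distrib_left integral_add)
  show ?thesis using assms unfolding Good_def F E J
    by (auto intro!: continuous_intros bounded_plus_comp)
qed

lemma Good_scale: assumes "Good f" "c \<ge> 0" shows "Good (\<lambda>v. c * f v)"
proof -
  have F: "Fk (\<lambda>v. c * f v) = (\<lambda>u. c * Fk f u)" by (rule ext) (simp add: Fk_scale)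
  have E: "Ek (\<lambda>v. c * f v) = (\<lambda>u. c * Ek f u)" by (rule ext) (simp add: Ek_scale)
  have J: "Jk (\<lambda>v. c * f v) = c * Jk f"
    unfolding Jk_def E by (simp add: algebra_simps)
  show ?thesis using assms unfolding Good_def F E J
    by (auto intro!: continuous_intros bounded_range_cmult)
qed

end

inductive PD :: "(real \<Rightarrow> real) \<Rightarrow> bool" where
  PD_cos: "PD (\<lambda>v. cos (\<theta> * v))"
| PD_add: "PD f \<Longrightarrow> PD g \<Longrightarrow> PD (\<lambda>v. f v + g v)"
| PD_scale: "PD f \<Longrightarrow> c \<ge> 0 \<Longrightarrow> PD (\<lambda>v. c * f v)"

lemma PD_cos_mult: "PD g \<Longrightarrow> PD (\<lambda>v. cos (\<theta> * v) * g v)"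
proof (induction rule: PD.induct)
  case (PD_cos \<phi>)
  have "(\<lambda>v. cos (\<theta> * v) * cos (\<phi> * v)) = (\<lambda>v. (1/2) * cos ((\<theta> - \<phi>) * v) + (1/2) * cos ((\<theta> + \<phi>) * v))"
    by (rule ext) (simp add: cos_times_cos left_diff_distrib distrib_right)
  moreover have "PD (\<lambda>v. (1/2) * cos ((\<theta> - \<phi>) * v) + (1/2) * cos ((\<theta> + \<phi>) * v))"
    by (intro PD.PD_add PD.PD_scale PD.PD_cos) auto
  ultimately show ?case by simp
next
  case (PD_add f g)
  then show ?case using PD.PD_add[OF PD_add.IH] by (simp add: distrib_left)
next
  case (PD_scale f c)
  then show ?case using PD.PD_scale[OF PD_scale.IH PD_scale.hyps(2)] by (simp add: algebra_simps)
qed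

lemma PD_mult: "PD f \<Longrightarrow> PD g \<Longrightarrow> PD (\<lambda>v. f v * g v)"
proof (induction rule: PD.induct)
  case (PD_cos \<theta>) then show ?case by (rule PD_cos_mult)
next
  case (PD_add f h)
  then show ?case using PD.PD_add[OF PD_add.IH] by (simp add: distrib_right)
next
  case (PD_scale f c)
  then show ?case using PD.PD_scale[OF PD_scale.IH PD_scale.hyps(2)] by (simp add: algebra_simps)
qed

lemma PD_cospow: "PD (\<lambda>v. cos (a * v) ^ (2 * L))"
proof (induction L)
  case 0
  then show ?case using PD_cos[of 0] by simp
next
  case (Suc L)
  have "(\<lambda>v. cos (a * v) ^ (2 * Suc L)) = (\<lambda>v. cos (a * v) * (cos (a * v) * cos (a * v) ^ (2 * L)))"
    by (rule ext) (simp add: power_add)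
  then show ?case using PD_cos_mult[OF PD_cos_mult[OF Suc.IH]] by simp
qed

context kset begin
lemma PD_Good: "PD f \<Longrightarrow> Good f"
  by (induction rule: PD.induct) (auto intro: Good_cos Good_add Good_scale)
end



locale kern =
  fixes P :: real assumes Ppos: "P > 0"
begin

definition "q = pi / P"
definition "IL L = integral {-P/2..P/2} (\<lambda>v. cos (q * v) ^ (2 * L))"

lemma qpos: "q > 0" using Ppos by (simp add: q_def)

lemma cos_mono_sq:
  assumes "0 \<le> a" "a \<le> b" "b \<le> pi/2"
  shows "cos b ^ 2 \<le> cos a ^ 2"
proof -
  have "cos b \<le> cos a" using assms by (intro cos_monotone_0_pi_le) auto
  moreover have "0 \<le> cos b" using assms by (intro cos_ge_zero) auto
  ultimately show ?thesis by (intro power_mono) auto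
qed

lemma cosB:
  assumes "0 < m" "m \<le> v" "v \<le> P - m" "m \<le> P/2"
  shows "cos (q * v) ^ 2 \<le> cos (q * m) ^ 2"
proof -
  have qP: "q * (P/2) = pi/2" using Ppos by (simp add: q_def)
  have mono: "q * a \<le> q * b" if "a \<le> b" for a b using qpos that by (intro mult_left_mono) auto
  show ?thesis
  proof (cases "v \<le> P/2")
  case True
  have "q * v \<le> pi/2" using mono[of v "P/2"] qP True by simp
  then show ?thesis using assms qpos mono[of m v]
    by (intro cos_mono_sq) auto
next
  case False
  have e: "cos (q * v) ^ 2 = cos (q * (P - v)) ^ 2"
  proof -
    have "q * (P - v) = pi - q * v" using Ppos by (simp add: q_def field_simps)
    then show ?thesis by simp
  qed
  have "q * (P - v) \<le> pi/2" using mono[of "P - v" "P/2"] qP False by simp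
  then show ?thesis unfolding e using assms qpos False mono[of m "P - v"]
    by (intro cos_mono_sq) auto
qed
qed

lemma cosB_abs:
  assumes "0 < m" "m \<le> \<bar>v\<bar>" "\<bar>v\<bar> \<le> P/2"
  shows "cos (q * v) ^ 2 \<le> cos (q * m) ^ 2"
proof -
  have "cos (q * v) ^ 2 = cos (q * \<bar>v\<bar>) ^ 2" by (cases "v \<ge> 0") auto
  also have "\<dots> \<le> cos (q * m) ^ 2" using assms by (intro cosB) auto
  finally show ?thesis .
qed

lemma cospow_int: "(\<lambda>v. cos (q * v) ^ (2 * L)) integrable_on {a..b}"
  by (intro integrable_continuous_interval continuous_intros)

lemma IL_lower:
  assumes "0 < m" "m \<le> P/2"
  shows "IL L \<ge> m * cos (q * (m/2)) ^ (2 * L)"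
proof -
  have "integral {-(m/2)..m/2} (\<lambda>v. cos (q * (m/2)) ^ (2 * L)) \<le> integral {-(m/2)..m/2} (\<lambda>v. cos (q * v) ^ (2 * L))"
  proof (rule integral_le)
    fix v assume v: "v \<in> {-(m/2)..m/2}"
    show "cos (q * (m/2)) ^ (2 * L) \<le> cos (q * v) ^ (2 * L)"
    proof -
      have "cos (q * v) ^ 2 = cos (q * \<bar>v\<bar>) ^ 2" by (cases "v \<ge> 0") auto
      also have "\<dots> \<ge> cos (q * (m/2)) ^ 2"
      proof (rule cos_mono_sq)
        show "0 \<le> q * \<bar>v\<bar>" using qpos by simp
        show "q * \<bar>v\<bar> \<le> q * (m / 2)" using v qpos by (intro mult_left_mono) auto
        have "q * (m/2) \<le> q * (P/2)" using assms qpos by (intro mult_left_mono) auto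
        then show "q * (m / 2) \<le> pi / 2" using Ppos by (simp add: q_def)
      qed
      finally have "cos (q * (m/2)) ^ 2 \<le> cos (q * v) ^ 2" .
      then show ?thesis unfolding power_mult by (rule power_mono) simp
    qed
  qed (auto intro: cospow_int)
  also have "\<dots> \<le> IL L" unfolding IL_def
    using assms by (intro integral_subset_le cospow_int) (auto simp: power_mult)
  finally show ?thesis using assms by simp
qed

lemma IL_pos: "IL L > 0"
proof -
  have "IL L \<ge> (P/2) * cos (q * (P/4)) ^ (2 * L)" using IL_lower[of "P/2" L] Ppos by simp
  moreover have "cos (q * (P/4)) > 0" using Ppos by (intro cos_gt_zero) (auto simp: q_def)
  then have "0 < (P/2) * cos (q * (P/4)) ^ (2 * L)" using Ppos by (intro mult_pos_pos zero_less_power) auto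
  ultimately show ?thesis by linarith
qed

lemma decay:
  assumes "0 < m" "m \<le> P/2"
  shows "(\<lambda>L. cos (q * m) ^ (2 * L) / IL L) \<longlonglongrightarrow> 0"
proof -
  define a where "a = cos (q * m) ^ 2"
  define b where "b = cos (q * (m/2)) ^ 2"
  have qm1: "0 < q * m" using qpos assms by simp
  have "q * m \<le> q * (P/2)" using qpos assms by (intro mult_left_mono) auto
  then have qm2: "q * m \<le> pi/2" using Ppos by (simp add: q_def)
  have h1: "0 < q * (m/2)" "q * (m/2) < pi/2" using qm1 qm2 pi_gt_zero by linarith+
  have b0: "b > 0" unfolding b_def using cos_gt_zero[OF h1] by simp
  have ab: "a < b"
  proof -
    have "cos (q * m) < cos (q * (m/2))" using qm1 qm2 h1
      by (intro cos_monotone_0_pi) (linarith+)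
    moreover have "0 \<le> cos (q * m)" using qm1 qm2 by (intro cos_ge_zero) auto
    ultimately show ?thesis unfolding a_def b_def by (intro power_strict_mono) auto
  qed
  have a0: "a \<ge> 0" unfolding a_def by simp
  have r: "(\<lambda>L. (a / b) ^ L) \<longlonglongrightarrow> 0"
    using a0 b0 ab by (intro LIMSEQ_power_zero) auto
  have le: "norm (cos (q * m) ^ (2 * L) / IL L) \<le> (1/m) * (a / b) ^ L" for L
  proof -
    have "IL L \<ge> m * b ^ L" using IL_lower[OF assms, of L] by (simp add: b_def power_mult)
    then have "cos (q * m) ^ (2 * L) / IL L \<le> a ^ L / (m * b ^ L)"
      using IL_pos[of L] assms b0 unfolding a_def power_mult
      by (intro divide_left_mono) auto
    also have "\<dots> = (1/m) * (a / b) ^ L" by (simp add: power_divide)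
    finally show ?thesis using IL_pos[of L] by (simp add: power_mult)
  qed
  have r2: "(\<lambda>L. (1/m) * (a / b) ^ L) \<longlonglongrightarrow> 0" using tendsto_mult[OF tendsto_const r, of "1/m"] by simp
  show ?thesis
    by (rule Lim_null_comparison[OF _ r2]) (use le in \<open>auto intro: always_eventually\<close>)
qed

lemma cos_period_sq: "cos (x + of_int k * pi) ^ 2 = cos x ^ 2"
proof -
  have s: "sin (of_int k * pi) = 0" using sin_zero_iff_int2 by blast
  have c: "cos (of_int k * pi) ^ 2 = 1" using sin_cos_squared_add[of "of_int k * pi"] s by simp
  show ?thesis by (simp add: cos_add s power_mult_distrib c)
qed

lemma sub_reflect:
  fixes g :: "real \<Rightarrow> real"
  shows "integral {0..T} (\<lambda>s. g (w - s)) = integral {w - T..w} g"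
proof -
  have "integral {0..T} (\<lambda>s. g (w - s)) = integral {- 0..- (-T)} (\<lambda>s. (\<lambda>x. g (w + x)) (- s))" by simp
  also have "\<dots> = integral {-T..0} (\<lambda>x. g (w + x))" using Henstock_Kurzweil_Integration.integral_reflect_real[of 0 "-T"  "\<lambda>x. g (w + x)"] by simp
  also have "\<dots> = integral {-T+w..0+w} g" using integral_shift_Icc_real[of "-T" 0 g w] by (simp add: o_def)
  finally show ?thesis by simp
qed

end


context kset begin

definition "Mn = integral {0<..} (\<lambda>x. \<bar>M x\<bar>)"

lemma Mabs_int: "(\<lambda>x. \<bar>M x\<bar>) integrable_on {0<..}"
  using Mabs unfolding absolutely_integrable_on_def by simp

lemma M_int: "M integrable_on {0<..}"
  using Mabs unfolding absolutely_integrable_on_def by simp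

end

locale kper = kset T y M + kern P for T y M P +
  assumes P2: "P > 2 * T"
begin

definition "kL L v = (1 / IL L) * cos (q * v) ^ (2 * L)"
definition "wr u = u - P * of_int (floor (u / P))"
definition "yt u = (if wr u \<le> T then y (wr u) else 0)"

lemma PD_kL: "PD (kL L)"
  unfolding kL_def[abs_def] using IL_pos[of L] by (intro PD_scale PD_cospow) auto

lemma kL_nonneg: "kL L v \<ge> 0"
  unfolding kL_def using IL_pos[of L] by (simp add: power_mult)

lemma wr_bounds: "0 \<le> wr u" "wr u < P"
proof -
  have a: "of_int (floor (u / P)) \<le> u / P" "u / P < of_int (floor (u / P)) + 1" by linarith+
  have "P * of_int (floor (u / P)) \<le> P * (u / P)" using a(1) Ppos by (intro mult_left_mono) auto
  moreover have "P * (u / P) < P * (of_int (floor (u / P)) + 1)" using a(2) Ppos by (intro mult_strict_left_mono) auto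
  ultimately show "0 \<le> wr u" "wr u < P" unfolding wr_def using Ppos by (auto simp: algebra_simps)
qed

lemma kL_period: "kL L (u - s) = kL L (wr u - s)"
proof -
  have "q * (u - s) = q * (wr u - s) + of_int (floor (u / P)) * pi"
    unfolding wr_def q_def using Ppos by (simp add: field_simps)
  then have "cos (q * (u - s)) ^ 2 = cos (q * (wr u - s)) ^ 2" by (simp add: cos_period_sq)
  then show ?thesis unfolding kL_def power_mult by simp
qed

lemma Fk_kL: "Fk (kL L) u = integral {0..T} (\<lambda>s. y s * kL L (wr u - s))"
  unfolding Fk_def by (simp only: kL_period[of L u])

lemma kL_int: "(\<lambda>s. kL L (w - s)) integrable_on {a..b}"
  unfolding kL_def by (intro integrable_continuous_interval continuous_intros)

lemma mass: "integral {0..T} (\<lambda>s. kL L (w - s)) = (1 / IL L) * integral {w - T..w} (\<lambda>v. cos (q * v) ^ (2 * L))"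
proof -
  have 1: "integral {0..T} (\<lambda>s. kL L (w - s)) = integral {w - T..w} (kL L)" by (rule sub_reflect)
  have e: "kL L = (\<lambda>v. (1 / IL L) * cos (q * v) ^ (2 * L))" by (rule ext) (simp only: kL_def)
  have 2: "integral {w - T..w} (kL L) = (1 / IL L) * integral {w - T..w} (\<lambda>v. cos (q * v) ^ (2 * L))"
    unfolding e by (rule integral_mult_right)
  show ?thesis using 1 2 by simp
qed

lemma shift_period: "integral {P/2..3*P/2} (\<lambda>v. cos (q * v) ^ (2 * L)) = IL L"
proof -
  have "integral {-P/2..P/2} ((\<lambda>v. cos (q * v) ^ (2 * L)) \<circ> (+) P) = integral {-P/2+P..P/2+P} (\<lambda>v. cos (q * v) ^ (2 * L))"
    by (rule integral_shift_Icc_real)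
  moreover have "((\<lambda>v. cos (q * v) ^ (2 * L)) \<circ> (+) P) = (\<lambda>v. cos (q * v) ^ (2 * L))"
  proof
    fix v
    have "q * (P + v) = q * v + of_int 1 * pi" using Ppos by (simp add: q_def field_simps)
    then have "cos (q * (P + v)) ^ 2 = cos (q * v) ^ 2" using cos_period_sq[of "q * v" 1] by simp
    then show "((\<lambda>v. cos (q * v) ^ (2 * L)) \<circ> (+) P) v = cos (q * v) ^ (2 * L)" by (simp add: power_mult)
  qed
  moreover have "-P/2+P = P/2" "P/2+P = 3*P/2" by auto
  ultimately show ?thesis unfolding IL_def by simp
qed

lemma mass_le: assumes "0 \<le> w" "w < P" shows "integral {0..T} (\<lambda>s. kL L (w - s)) \<le> 2"
proof -
  have "integral {w - T..w} (\<lambda>v. cos (q * v) ^ (2 * L)) \<le> integral {-P/2..3*P/2} (\<lambda>v. cos (q * v) ^ (2 * L))"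
    using assms P2 Tpos by (intro integral_subset_le cospow_int) (auto simp: power_mult)
  also have "\<dots> = IL L + integral {P/2..3*P/2} (\<lambda>v. cos (q * v) ^ (2 * L))"
    unfolding IL_def using Ppos by (intro Henstock_Kurzweil_Integration.integral_combine[symmetric] cospow_int) auto
  also have "\<dots> = 2 * IL L" using shift_period by simp
  finally show ?thesis unfolding mass using IL_pos[of L] by (simp add: field_simps)
qed

lemma Fk_bound: "\<bar>Fk (kL L) u\<bar> \<le> 2 * By"
proof -
  have "\<bar>Fk (kL L) u\<bar> \<le> integral {0..T} (\<lambda>s. By * kL L (wr u - s))"
    unfolding Fk_kL real_norm_def[symmetric]
  proof (rule integral_norm_bound_integral)
    show "(\<lambda>s. y s * kL L (wr u - s)) integrable_on {0..T}"
      unfolding kL_def by (intro yprod continuous_intros)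
    show "(\<lambda>s. By * kL L (wr u - s)) integrable_on {0..T}"
      by (intro integrable_on_mult_right kL_int)
    fix s assume "s \<in> {0..T}"
    then show "norm (y s * kL L (wr u - s)) \<le> By * kL L (wr u - s)"
      using By_bound kL_nonneg by (simp add: abs_mult mult_right_mono)
  qed
  also have "\<dots> = By * integral {0..T} (\<lambda>s. kL L (wr u - s))" by simp
  also have "\<dots> \<le> By * 2" using mass_le[OF wr_bounds] By_nonneg by (intro mult_left_mono) auto
  finally show ?thesis by simp
qed

definition "rho L m = cos (q * m) ^ (2 * L) / IL L"

lemma kL_far:
  assumes "0 < m" "m \<le> v" "v \<le> P - m" "m \<le> P/2"
  shows "kL L v \<le> rho L m"
proof -
  have "(cos (q * v) ^ 2) ^ L \<le> (cos (q * m) ^ 2) ^ L"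
    using cosB[OF assms] by (rule power_mono) simp
  then show ?thesis unfolding kL_def rho_def power_mult using IL_pos[of L]
    by (simp add: divide_right_mono)
qed

lemma kL_far_abs:
  assumes "0 < m" "m \<le> \<bar>v\<bar>" "\<bar>v\<bar> \<le> P/2"
  shows "kL L v \<le> rho L m"
proof -
  have "(cos (q * v) ^ 2) ^ L \<le> (cos (q * m) ^ 2) ^ L"
    using cosB_abs[OF assms] by (rule power_mono) simp
  then show ?thesis unfolding kL_def rho_def power_mult using IL_pos[of L]
    by (simp add: divide_right_mono)
qed

lemma rho_lim: "0 < m \<Longrightarrow> m \<le> P/2 \<Longrightarrow> (\<lambda>L. rho L m) \<longlonglongrightarrow> 0"
  unfolding rho_def by (rule decay)

lemma rho_nonneg: "rho L m \<ge> 0"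
  unfolding rho_def using IL_pos[of L] by (simp add: power_mult)

lemma int_bound_const:
  assumes "f integrable_on {0..T}" "\<And>s. s \<in> {0..T} \<Longrightarrow> \<bar>f s\<bar> \<le> c"
  shows "\<bar>integral {0..T} f\<bar> \<le> T * c"
proof -
  have "norm (integral {0..T} f) \<le> integral {0..T} (\<lambda>s. c)"
    by (rule integral_norm_bound_integral) (use assms in auto)
  then show ?thesis using Tpos by simp
qed

lemma convB:
  assumes "T < wr u"
  shows "(\<lambda>L. Fk (kL L) u) \<longlonglongrightarrow> 0"
proof -
  define w where "w = wr u"
  define m where "m = min (w - T) (P - w)"
  have w1: "T < w" "w < P" using assms wr_bounds[of u] unfolding w_def by auto
  have mw: "m \<le> w - T" "m \<le> P - w" unfolding m_def by auto
  have m0: "0 < m" using w1 unfolding m_def by auto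
  have mP: "m \<le> P/2" using mw Tpos by linarith
  have le: "\<bar>Fk (kL L) u\<bar> \<le> T * (By * rho L m)" for L
    unfolding Fk_kL w_def[symmetric]
  proof (rule int_bound_const)
    show "(\<lambda>s. y s * kL L (w - s)) integrable_on {0..T}"
      unfolding kL_def by (intro yprod continuous_intros)
    fix s assume s: "s \<in> {0..T}"
    have s1: "m \<le> w - s" "w - s \<le> P - m" using s mw by auto
    have k: "kL L (w - s) \<le> rho L m" by (rule kL_far[OF m0 s1 mP])
    have "\<bar>y s\<bar> * kL L (w - s) \<le> By * rho L m"
      by (rule mult_mono[OF By_bound[OF s] k By_nonneg kL_nonneg])
    then show "\<bar>y s * kL L (w - s)\<bar> \<le> By * rho L m"
      using kL_nonneg[of L "w - s"] by (simp add: abs_mult)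
  qed
  have lim: "(\<lambda>L. T * (By * rho L m)) \<longlonglongrightarrow> T * (By * 0)"
    by (intro tendsto_intros rho_lim m0 mP)
  show ?thesis
  proof (rule Lim_null_comparison[OF always_eventually])
    show "\<forall>L. norm (Fk (kL L) u) \<le> T * (By * rho L m)" using le by simp
    show "(\<lambda>L. T * (By * rho L m)) \<longlonglongrightarrow> 0" using lim by simp
  qed
qed

lemma IL_split:
  assumes "-P/2 \<le> a" "a \<le> b" "b \<le> P/2"
  shows "IL L = integral {-P/2..a} (\<lambda>v. cos (q * v) ^ (2 * L)) + integral {a..b} (\<lambda>v. cos (q * v) ^ (2 * L))
     + integral {b..P/2} (\<lambda>v. cos (q * v) ^ (2 * L))"
proof -
  have "integral {-P/2..a} (\<lambda>v. cos (q * v) ^ (2 * L)) + integral {a..P/2} (\<lambda>v. cos (q * v) ^ (2 * L)) = IL L"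
    unfolding IL_def using assms by (intro Henstock_Kurzweil_Integration.integral_combine cospow_int) auto
  moreover have "integral {a..b} (\<lambda>v. cos (q * v) ^ (2 * L)) + integral {b..P/2} (\<lambda>v. cos (q * v) ^ (2 * L)) = integral {a..P/2} (\<lambda>v. cos (q * v) ^ (2 * L))"
    using assms by (intro Henstock_Kurzweil_Integration.integral_combine cospow_int) auto
  ultimately show ?thesis by simp
qed

lemma tail_piece:
  assumes "0 < m" "m \<le> P/2" "\<And>v. v \<in> {a..b} \<Longrightarrow> m \<le> \<bar>v\<bar> \<and> \<bar>v\<bar> \<le> P/2" "a \<le> b"
  shows "0 \<le> integral {a..b} (\<lambda>v. cos (q * v) ^ (2 * L)) / IL L"
    "integral {a..b} (\<lambda>v. cos (q * v) ^ (2 * L)) / IL L \<le> (b - a) * rho L m"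
proof -
  show "0 \<le> integral {a..b} (\<lambda>v. cos (q * v) ^ (2 * L)) / IL L"
    using IL_pos[of L] by (intro divide_nonneg_pos integral_nonneg cospow_int) (auto simp: power_mult)
  have "integral {a..b} (\<lambda>v. cos (q * v) ^ (2 * L)) / IL L = integral {a..b} (kL L)"
  proof -
    have e: "kL L = (\<lambda>v. (1 / IL L) * cos (q * v) ^ (2 * L))" by (rule ext) (simp only: kL_def)
    show ?thesis unfolding e integral_mult_right by simp
  qed
  also have "\<dots> \<le> integral {a..b} (\<lambda>v. rho L m)"
  proof (rule integral_le)
    show "kL L integrable_on {a..b}" using kL_int[of L 0 "-b" "-a"] by simp
    fix v assume "v \<in> {a..b}"
    then show "kL L v \<le> rho L m" using assms by (intro kL_far_abs) auto
  qed auto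
  also have "\<dots> = (b - a) * rho L m" using assms by simp
  finally show "integral {a..b} (\<lambda>v. cos (q * v) ^ (2 * L)) / IL L \<le> (b - a) * rho L m" .
qed

lemma mass_defect:
  assumes "0 < wr u" "wr u < T"
  defines "m \<equiv> min (wr u) (T - wr u)"
  shows "\<bar>integral {0..T} (\<lambda>s. kL L (wr u - s)) - 1\<bar> \<le> P * rho L m"
proof -
  define w where "w = wr u"
  have "m \<le> wr u" "m \<le> T - wr u" unfolding m_def by auto
  then have m0: "0 < m" and mP: "m \<le> P/2" using assms P2 unfolding m_def by linarith+
  define X where "X = integral {-P/2..w - T} (\<lambda>v. cos (q * v) ^ (2 * L)) / IL L"
  define Y where "Y = integral {w..P/2} (\<lambda>v. cos (q * v) ^ (2 * L)) / IL L"
  have spl: "IL L = integral {-P/2..w - T} (\<lambda>v. cos (q * v) ^ (2 * L)) + integral {w - T..w} (\<lambda>v. cos (q * v) ^ (2 * L))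
     + integral {w..P/2} (\<lambda>v. cos (q * v) ^ (2 * L))"
    using assms P2 unfolding w_def by (intro IL_split) auto
  have A2: "integral {w - T..w} (\<lambda>v. cos (q * v) ^ (2 * L)) = IL L - integral {-P/2..w - T} (\<lambda>v. cos (q * v) ^ (2 * L))
       - integral {w..P/2} (\<lambda>v. cos (q * v) ^ (2 * L))" using spl by linarith
  have eqXY: "integral {0..T} (\<lambda>s. kL L (wr u - s)) - 1 = - (X + Y)"
    unfolding mass X_def Y_def w_def[symmetric] A2 using IL_pos[of L]
    by (simp add: field_simps)
  have mm: "m \<le> w" "m \<le> T - w" unfolding m_def w_def by auto
  have wb: "0 < w" "w < T" using assms unfolding w_def by auto
  have hX: "m \<le> \<bar>v\<bar> \<and> \<bar>v\<bar> \<le> P/2" if "v \<in> {-P/2..w - T}" for v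
    using that mm wb by auto
  have hY: "m \<le> \<bar>v\<bar> \<and> \<bar>v\<bar> \<le> P/2" if "v \<in> {w..P/2}" for v
    using that mm wb by auto
  have o1: "-P/2 \<le> w - T" "w \<le> P/2" using wb P2 by auto
  note tX = tail_piece[OF m0 mP hX o1(1), of L]
  note tY = tail_piece[OF m0 mP hY o1(2), of L]
  moreover have "0 \<le> X" "X \<le> ((w - T) - (-P/2)) * rho L m"
    unfolding X_def using tX by auto
  moreover have "0 \<le> Y" "Y \<le> (P/2 - w) * rho L m"
    unfolding Y_def using tY by auto
  moreover have "((w - T) - (-P/2)) * rho L m + (P/2 - w) * rho L m \<le> P * rho L m"
    using rho_nonneg[of L m] Tpos by (simp add: algebra_simps mult_right_mono)
  ultimately show ?thesis using eqXY by simp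
qed

lemma convA:
  assumes "0 < wr u" "wr u < T"
  shows "(\<lambda>L. Fk (kL L) u) \<longlonglongrightarrow> y (wr u)"
proof (rule LIMSEQ_I)
  fix r :: real assume r: "0 < r"
  define w where "w = wr u"
  define m where "m = min (wr u) (T - wr u)"
  have wb: "0 < w" "w < T" using assms unfolding w_def by auto
  have mm: "m \<le> w" "m \<le> T - w" unfolding m_def w_def by auto
  have m0: "0 < m" using wb unfolding m_def w_def by auto
  have mP: "m \<le> P/2" using mm P2 Tpos by auto
  have wT: "w \<in> {0..T}" using wb by auto
  obtain d where d0: "d > 0" and dd: "\<And>s. s \<in> {0..T} \<Longrightarrow> dist s w < d \<Longrightarrow> dist (y s) (y w) < r/4"
    using ycont wT r unfolding continuous_on_iff by (metis divide_pos_pos zero_less_numeral)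
  define d' where "d' = min d m"
  have d'0: "0 < d'" using d0 m0 unfolding d'_def by auto
  have d'P: "d' \<le> P/2" using mP unfolding d'_def by auto
  define Z where "Z L = 2 * By * T * rho L d' + By * P * rho L m" for L
  have "Z \<longlonglongrightarrow> 2 * By * T * 0 + By * P * 0"
    unfolding Z_def[abs_def] by (intro tendsto_intros rho_lim d'0 d'P m0 mP)
  then have "Z \<longlonglongrightarrow> 0" by simp
  then obtain N where N: "\<And>L. L \<ge> N \<Longrightarrow> norm (Z L - 0) < r/2"
    using LIMSEQ_D[of Z 0 "r/2"] r by auto
  show "\<exists>no. \<forall>n\<ge>no. norm (Fk (kL n) u - y (wr u)) < r"
  proof (intro exI allI impI)
    fix L assume "N \<le> L"
    then have "\<bar>Z L\<bar> < r/2" using N by simp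
    then have ZL: "Z L < r/2" using abs_ge_self[of "Z L"] by linarith
    have ik: "(\<lambda>s. kL L (w - s)) integrable_on {0..T}" by (rule kL_int)
    have iyk: "(\<lambda>s. y s * kL L (w - s)) integrable_on {0..T}"
      unfolding kL_def by (intro yprod continuous_intros)
    have iyk2: "(\<lambda>s. y w * kL L (w - s)) integrable_on {0..T}" by (intro integrable_on_mult_right ik)
    have dec: "Fk (kL L) u - y w = integral {0..T} (\<lambda>s. (y s - y w) * kL L (w - s))
        + y w * (integral {0..T} (\<lambda>s. kL L (w - s)) - 1)"
    proof -
      have "integral {0..T} (\<lambda>s. (y s - y w) * kL L (w - s)) = integral {0..T} (\<lambda>s. y s * kL L (w - s)) - integral {0..T} (\<lambda>s. y w * kL L (w - s))"
        unfolding left_diff_distrib by (rule integral_diff[OF iyk iyk2])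
      then show ?thesis unfolding Fk_kL w_def[symmetric] by (simp add: algebra_simps)
    qed
    have t1: "\<bar>integral {0..T} (\<lambda>s. (y s - y w) * kL L (w - s))\<bar> \<le> r/2 + 2 * By * T * rho L d'"
    proof -
      have "norm (integral {0..T} (\<lambda>s. (y s - y w) * kL L (w - s))) \<le> integral {0..T} (\<lambda>s. r/4 * kL L (w - s) + 2 * By * rho L d')"
      proof (rule integral_norm_bound_integral)
        show "(\<lambda>s. (y s - y w) * kL L (w - s)) integrable_on {0..T}"
          unfolding left_diff_distrib by (intro integrable_diff iyk iyk2)
        show "(\<lambda>s. r / 4 * kL L (w - s) + 2 * By * rho L d') integrable_on {0..T}"
          by (intro integrable_add integrable_on_mult_right ik integrable_const_ivl)
        fix s assume s: "s \<in> {0..T}"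
        have k0: "0 \<le> kL L (w - s)" by (rule kL_nonneg)
        have yb: "\<bar>y s - y w\<bar> \<le> 2 * By" using By_bound[OF s] By_bound[OF wT] by linarith
        show "norm ((y s - y w) * kL L (w - s)) \<le> r / 4 * kL L (w - s) + 2 * By * rho L d'"
        proof (cases "\<bar>s - w\<bar> < d'")
          case True
          then have "\<bar>y s - y w\<bar> < r/4" using dd[OF s] unfolding d'_def dist_real_def by auto
          then have "\<bar>y s - y w\<bar> * kL L (w - s) \<le> r/4 * kL L (w - s)" using k0 by (intro mult_right_mono) auto
          moreover have "0 \<le> 2 * By * rho L d'" using By_nonneg rho_nonneg[of L d'] by simp
          ultimately show ?thesis using k0 by (simp add: abs_mult)
        next
          case False
          have a1: "d' \<le> \<bar>w - s\<bar>" using False by (simp add: abs_minus_commute)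
          have a2: "\<bar>w - s\<bar> \<le> P/2" unfolding abs_le_iff using s wb P2 by auto
          have "kL L (w - s) \<le> rho L d'" by (rule kL_far_abs[OF d'0 a1 a2])
          then have "\<bar>y s - y w\<bar> * kL L (w - s) \<le> 2 * By * rho L d'"
            using yb k0 by (intro mult_mono) auto
          moreover have "0 \<le> r / 4 * kL L (w - s)" using k0 r by simp
          ultimately show ?thesis using k0 by (simp add: abs_mult)
        qed
      qed
      also have "\<dots> = r/4 * integral {0..T} (\<lambda>s. kL L (w - s)) + T * (2 * By * rho L d')"
        using Tpos by (subst integral_add) (auto intro: integrable_on_mult_right ik)
      also have "\<dots> \<le> r/4 * 2 + T * (2 * By * rho L d')"
        using mass_le[of w L] wb P2 r by (intro add_right_mono mult_left_mono) auto
      finally show ?thesis by (simp add: algebra_simps)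
    qed
    have t2: "\<bar>y w * (integral {0..T} (\<lambda>s. kL L (w - s)) - 1)\<bar> \<le> By * (P * rho L m)"
      unfolding abs_mult using By_bound[OF wT] mass_defect[OF assms, of L] By_nonneg
      unfolding w_def m_def by (intro mult_mono) auto
    have "\<bar>Fk (kL L) u - y w\<bar> \<le> r/2 + Z L" unfolding dec Z_def using t1 t2 by (simp add: algebra_simps)
    then show "norm (Fk (kL L) u - y (wr u)) < r" using ZL unfolding w_def by simp
  qed
qed

lemma conv: "wr u \<noteq> 0 \<Longrightarrow> wr u \<noteq> T \<Longrightarrow> (\<lambda>L. Fk (kL L) u) \<longlonglongrightarrow> yt u"
proof -
  assume a: "wr u \<noteq> 0" "wr u \<noteq> T"
  show ?thesis
  proof (cases "wr u < T")
    case True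
    then show ?thesis using convA[of u] a wr_bounds[of u] unfolding yt_def by auto
  next
    case False
    then show ?thesis using convB[of u] a unfolding yt_def by auto
  qed
qed

lemma yt_bound: "\<bar>yt u\<bar> \<le> By"
  unfolding yt_def using By_bound[of "wr u"] wr_bounds[of u] By_nonneg by auto

definition "Exc t = {x. wr (t - x) = 0 \<or> wr (t - x) = T}"

lemma countable_negligible: "countable (A :: real set) \<Longrightarrow> negligible A"
proof -
  assume "countable A"
  then have "negligible (\<Union>((\<lambda>x. {x}) ` A))" by (intro negligible_countable_Union) auto
  then show ?thesis by simp
qed

lemma Exc_negligible: "negligible (Exc t)"
proof (rule countable_negligible, rule countable_subset)
  show "Exc t \<subseteq> range (\<lambda>k::int. t - P * of_int k) \<union> range (\<lambda>k::int. t - T - P * of_int k)"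
  proof
    fix x assume "x \<in> Exc t"
    then have "wr (t - x) = 0 \<or> wr (t - x) = T" unfolding Exc_def by auto
    then show "x \<in> range (\<lambda>k::int. t - P * of_int k) \<union> range (\<lambda>k::int. t - T - P * of_int k)"
    proof
      assume "wr (t - x) = 0"
      then have "x = t - P * of_int (floor ((t - x) / P))" unfolding wr_def by simp
      then show ?thesis by blast
    next
      assume "wr (t - x) = T"
      then have "x = t - T - P * of_int (floor ((t - x) / P))" unfolding wr_def by simp
      then show ?thesis by blast
    qed
  qed
qed auto

lemma Fk_kL_cont: "continuous_on UNIV (Fk (kL L))"
  using PD_Good[OF PD_kL[of L]] unfolding Good_def by auto

lemma Fk_kL_bdd: "bounded (range (Fk (kL L)))"
  using PD_Good[OF PD_kL[of L]] unfolding Good_def by auto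

lemma MF_int: "(\<lambda>x. M x * Fk (kL L) (t - x)) integrable_on {0<..}"
  by (intro Mprod_int cont_shift bounded_shift Fk_kL_cont Fk_kL_bdd)

lemma Ek_bound: "\<bar>Ek (kL L) t\<bar> \<le> 2 * By * Mn"
proof -
  have "norm (Ek (kL L) t) \<le> integral {0<..} (\<lambda>x. 2 * By * \<bar>M x\<bar>)"
    unfolding Ek_def
  proof (rule integral_norm_bound_integral)
    show "(\<lambda>x. M x * Fk (kL L) (t - x)) integrable_on {0<..}" by (rule MF_int)
    show "(\<lambda>x. 2 * By * \<bar>M x\<bar>) integrable_on {0<..}" by (intro integrable_on_mult_right Mabs_int)
    fix x
    have "\<bar>M x\<bar> * \<bar>Fk (kL L) (t - x)\<bar> \<le> \<bar>M x\<bar> * (2 * By)" using Fk_bound by (intro mult_left_mono) auto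
    then show "norm (M x * Fk (kL L) (t - x)) \<le> 2 * By * \<bar>M x\<bar>" by (simp add: abs_mult algebra_simps)
  qed
  then show ?thesis unfolding Mn_def by simp
qed

definition "H t = integral {0<..} (\<lambda>x. M x * yt (t - x))"

lemma H_conv: "(\<lambda>x. M x * yt (t - x)) integrable_on {0<..} \<and> (\<lambda>L. Ek (kL L) t) \<longlonglongrightarrow> H t"
proof -
  define S where "S = {0<..} - Exc t"
  have negd: "negligible {x \<in> S - {0<..}. f x \<noteq> 0}" "negligible {x \<in> {0<..} - S. f x \<noteq> 0}" for f :: "real \<Rightarrow> real"
    unfolding S_def by (auto intro: negligible_subset[OF Exc_negligible[of t]])
  have f1: "(\<lambda>x. M x * Fk (kL L) (t - x)) integrable_on S" for L
    by (rule integrable_spike_set[OF MF_int[of L t] negd(2) negd(1)])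
  have f2: "(\<lambda>x. 2 * By * \<bar>M x\<bar>) integrable_on S"
    by (rule integrable_spike_set[OF integrable_on_mult_right[OF Mabs_int, of "2 * By"] negd(2) negd(1)])
  have f3: "norm (M x * Fk (kL L) (t - x)) \<le> 2 * By * \<bar>M x\<bar>" if "x \<in> S" for L x
  proof -
    have "\<bar>M x\<bar> * \<bar>Fk (kL L) (t - x)\<bar> \<le> \<bar>M x\<bar> * (2 * By)" using Fk_bound by (intro mult_left_mono) auto
    then show ?thesis by (simp add: abs_mult algebra_simps)
  qed
  have f4: "(\<lambda>L. M x * Fk (kL L) (t - x)) \<longlonglongrightarrow> M x * yt (t - x)" if "x \<in> S" for x
    using that unfolding S_def Exc_def by (intro tendsto_intros conv) auto
  note dcr = dominated_convergence[where f="\<lambda>L x. M x * Fk (kL L) (t - x)" and h="\<lambda>x. 2 * By * \<bar>M x\<bar>"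
      and g="\<lambda>x. M x * yt (t - x)" and S=S, OF f1 f2 f3 f4]
  have dc: "(\<lambda>x. M x * yt (t - x)) integrable_on S \<and>
    (\<lambda>L. integral S (\<lambda>x. M x * Fk (kL L) (t - x))) \<longlonglongrightarrow> integral S (\<lambda>x. M x * yt (t - x))"
    using dcr by auto
  have e1: "integral S (\<lambda>x. M x * Fk (kL L) (t - x)) = Ek (kL L) t" for L
    unfolding Ek_def by (rule integral_spike_set[OF negd(1) negd(2)])
  have e2: "integral S (\<lambda>x. M x * yt (t - x)) = H t"
    unfolding H_def by (rule integral_spike_set[OF negd(1) negd(2)])
  have "(\<lambda>x. M x * yt (t - x)) integrable_on {0<..}"
    using dc integrable_spike_set[OF _ negd(1) negd(2)] by blast
  then show ?thesis using dc unfolding e1 e2 by auto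
qed

lemma H_bound: "\<bar>H t\<bar> \<le> By * Mn"
proof -
  have "norm (H t) \<le> integral {0<..} (\<lambda>x. By * \<bar>M x\<bar>)"
    unfolding H_def
  proof (rule integral_norm_bound_integral)
    show "(\<lambda>x. M x * yt (t - x)) integrable_on {0<..}" using H_conv by auto
    show "(\<lambda>x. By * \<bar>M x\<bar>) integrable_on {0<..}" by (intro integrable_on_mult_right Mabs_int)
    fix x
    have "\<bar>M x\<bar> * \<bar>yt (t - x)\<bar> \<le> \<bar>M x\<bar> * By" using yt_bound by (intro mult_left_mono) auto
    then show "norm (M x * yt (t - x)) \<le> By * \<bar>M x\<bar>" by (simp add: abs_mult algebra_simps)
  qed
  then show ?thesis unfolding Mn_def by simp
qed

lemma J_limit: "(\<lambda>t. y t * H t) integrable_on {0..T} \<and> integral {0..T} (\<lambda>t. y t * H t) \<ge> 0"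
proof -
  have f1: "(\<lambda>t. y t * Ek (kL L) t) integrable_on {0..T}" for L
    using PD_Good[OF PD_kL[of L]] unfolding Good_def by (intro yprod) auto
  have f2: "(\<lambda>t. By * (2 * By * Mn)) integrable_on {0..T}" by (rule integrable_const_ivl)
  have f3: "norm (y t * Ek (kL L) t) \<le> By * (2 * By * Mn)" if "t \<in> {0..T}" for L t
    unfolding real_norm_def abs_mult using By_bound[OF that] Ek_bound[of L t]
    by (intro mult_mono) auto
  have f4: "(\<lambda>L. y t * Ek (kL L) t) \<longlonglongrightarrow> y t * H t" if "t \<in> {0..T}" for t
    using H_conv[of t] by (intro tendsto_intros) auto
  note dcr = dominated_convergence[where f="\<lambda>L t. y t * Ek (kL L) t" and h="\<lambda>t. By * (2 * By * Mn)"
      and g="\<lambda>t. y t * H t" and S="{0..T}", OF f1 f2 f3 f4]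
  have dc: "(\<lambda>t. y t * H t) integrable_on {0..T} \<and>
    (\<lambda>L. integral {0..T} (\<lambda>t. y t * Ek (kL L) t)) \<longlonglongrightarrow> integral {0..T} (\<lambda>t. y t * H t)"
    using dcr by auto
  have "\<forall>L. integral {0..T} (\<lambda>t. y t * Ek (kL L) t) \<ge> 0"
    using PD_Good[OF PD_kL] unfolding Good_def Jk_def by auto
  then have "integral {0..T} (\<lambda>t. y t * H t) \<ge> 0"
    using dc by (intro LIMSEQ_le_const[of _ _ 0]) auto
  then show ?thesis using dc by auto
qed

lemma wr_id: "0 \<le> u \<Longrightarrow> u < P \<Longrightarrow> wr u = u"
proof -
  assume "0 \<le> u" "u < P"
  then have "floor (u / P) = 0" using Ppos by (simp add: floor_eq_iff field_simps)
  then show ?thesis unfolding wr_def by simp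
qed

lemma wr_neg: "-P \<le> u \<Longrightarrow> u < 0 \<Longrightarrow> wr u = u + P"
proof -
  assume "-P \<le> u" "u < 0"
  then have "floor (u / P) = -1" using Ppos by (simp add: floor_eq_iff field_simps)
  then show ?thesis unfolding wr_def by simp
qed

end

context kset begin

definition "G t = integral {0<..t} (\<lambda>x. M x * y (t - x))"
definition "tail a = integral {0<..} (\<lambda>x. if x \<in> {a..} then \<bar>M x\<bar> else 0)"

lemma Mabs_sub: "S \<in> sets lebesgue \<Longrightarrow> S \<subseteq> {0<..} \<Longrightarrow> M absolutely_integrable_on S"
  by (rule set_integrable_subset[OF Mabs])

lemma absM_sub: "S \<in> sets lebesgue \<Longrightarrow> S \<subseteq> {0<..} \<Longrightarrow> (\<lambda>x. \<bar>M x\<bar>) integrable_on S"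
  using Mabs_sub unfolding absolutely_integrable_on_def by auto

lemma tail_int: "(\<lambda>x. if x \<in> {a..} then \<bar>M x\<bar> else 0) integrable_on {0<..}"
  unfolding integrable_restrict_Int by (intro absM_sub) auto

lemma tail_nonneg: "tail a \<ge> 0"
  unfolding tail_def by (intro integral_nonneg tail_int) auto

end

context kper begin

lemma H_G:
  assumes t: "t \<in> {0..T}"
  shows "\<bar>H t - G t\<bar> \<le> By * tail (P - T)"
proof -
  define A where "A x = M x * yt (t - x)" for x
  have Aint: "A integrable_on {0<..}" using H_conv[of t] unfolding A_def by auto
  have Aabs: "A absolutely_integrable_on {0<..}"
  proof (rule absolutely_integrable_integrable_bound[OF _ Aint])
    show "(\<lambda>x. By * \<bar>M x\<bar>) integrable_on {0<..}" by (intro integrable_on_mult_right Mabs_int)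
    fix x
    have "\<bar>M x\<bar> * \<bar>yt (t - x)\<bar> \<le> \<bar>M x\<bar> * By" using yt_bound by (intro mult_left_mono) auto
    then show "norm (A x) \<le> By * \<bar>M x\<bar>" unfolding A_def by (simp add: abs_mult algebra_simps)
  qed
  have sub: "A integrable_on S" if "S \<in> sets lebesgue" "S \<subseteq> {0<..}" for S
    using set_integrable_subset[OF Aabs that] unfolding absolutely_integrable_on_def by auto
  have un: "{0<..} = {0<..t} \<union> {t<..}" using t by auto
  have disj: "{0<..t} \<inter> {t<..} = {}" by auto
  have HS: "H t = integral {0<..t} A + integral {t<..} A"
    unfolding H_def A_def[symmetric] un
    by (rule integral_Un) (use t disj in \<open>auto intro: sub\<close>)
  have G1: "integral {0<..t} A = G t"
    unfolding G_def
  proof (rule integral_cong)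
    fix x assume x: "x \<in> {0<..t}"
    then have "wr (t - x) = t - x" using t P2 Tpos by (intro wr_id) auto
    then show "A x = M x * y (t - x)" unfolding A_def yt_def using x t by auto
  qed
  have bnd: "norm (integral {t<..} A) \<le> integral {t<..} (\<lambda>x. By * (if x \<in> {P - T..} then \<bar>M x\<bar> else 0))"
  proof (rule integral_norm_bound_integral)
    show "A integrable_on {t<..}" using t by (intro sub) auto
    have "(\<lambda>x. if x \<in> {P - T..} then \<bar>M x\<bar> else 0) integrable_on {t<..}"
      unfolding integrable_restrict_Int using t P2 by (intro absM_sub) auto
    then show "(\<lambda>x. By * (if x \<in> {P - T..} then \<bar>M x\<bar> else 0)) integrable_on {t<..}"
      by (rule integrable_on_mult_right)
    fix x assume x: "x \<in> {t<..}"
    show "norm (A x) \<le> By * (if x \<in> {P - T..} then \<bar>M x\<bar> else 0)"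
    proof (cases "x < t + P - T")
      case True
      have "wr (t - x) = t - x + P" using x True t P2 by (intro wr_neg) auto
      then have "yt (t - x) = 0" unfolding yt_def using x True by auto
      then show ?thesis unfolding A_def using By_nonneg by simp
    next
      case False
      then have "x \<in> {P - T..}" using t by auto
      moreover have "\<bar>M x\<bar> * \<bar>yt (t - x)\<bar> \<le> \<bar>M x\<bar> * By" using yt_bound by (intro mult_left_mono) auto
      ultimately show ?thesis unfolding A_def by (simp add: abs_mult algebra_simps)
    qed
  qed
  also have "\<dots> \<le> integral {0<..} (\<lambda>x. By * (if x \<in> {P - T..} then \<bar>M x\<bar> else 0))"
  proof (rule integral_subset_le)
    show "{t<..} \<subseteq> {0<..}" using t by auto
    have "(\<lambda>x. if x \<in> {P - T..} then \<bar>M x\<bar> else 0) integrable_on {t<..}"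
      unfolding integrable_restrict_Int using t P2 by (intro absM_sub) auto
    then show "(\<lambda>x. By * (if x \<in> {P - T..} then \<bar>M x\<bar> else 0)) integrable_on {t<..}"
      by (rule integrable_on_mult_right)
    show "(\<lambda>x. By * (if x \<in> {P - T..} then \<bar>M x\<bar> else 0)) integrable_on {0<..}"
      by (intro integrable_on_mult_right tail_int)
  qed (use By_nonneg in auto)
  also have "\<dots> = By * tail (P - T)" unfolding tail_def by simp
  finally show ?thesis using HS G1 by simp
qed

end

context kset begin

lemma tail_lim: "(\<lambda>k. tail (T + 1 + real k)) \<longlonglongrightarrow> 0"
proof -
  have f1: "(\<lambda>x. if x \<in> {T + 1 + real k..} then \<bar>M x\<bar> else 0) integrable_on {0<..}" for k
    by (rule tail_int)
  have f3: "norm (if x \<in> {T + 1 + real k..} then \<bar>M x\<bar> else 0) \<le> \<bar>M x\<bar>" if "x \<in> {0<..}" for k x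
    by auto
  have f4: "(\<lambda>k. if x \<in> {T + 1 + real k..} then \<bar>M x\<bar> else 0) \<longlonglongrightarrow> 0" if "x \<in> {0<..}" for x
  proof (rule tendsto_eventually)
    obtain k0 :: nat where "x < real k0" using reals_Archimedean2 by blast
    then have "\<forall>k\<ge>k0. (if x \<in> {T + 1 + real k..} then \<bar>M x\<bar> else 0) = 0" using Tpos by auto
    then show "\<forall>\<^sub>F k in sequentially. (if x \<in> {T + 1 + real k..} then \<bar>M x\<bar> else 0) = 0"
      unfolding eventually_sequentially by blast
  qed
  note dcr = dominated_convergence[where f="\<lambda>k x. if x \<in> {T + 1 + real k..} then \<bar>M x\<bar> else 0"
      and h="\<lambda>x. \<bar>M x\<bar>" and g="\<lambda>x. 0" and S="{0<..}", OF f1 Mabs_int f3 f4]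
  then show ?thesis unfolding tail_def by simp
qed

lemma weighted: "(\<lambda>t. y t * G t) integrable_on {0..T} \<and> integral {0..T} (\<lambda>t. y t * G t) \<ge> 0"
proof -
  define HH where "HH k = kper.H T y M (2 * T + 1 + real k)" for k
  have facts: "(\<lambda>t. y t * HH k t) integrable_on {0..T} \<and> integral {0..T} (\<lambda>t. y t * HH k t) \<ge> 0
     \<and> (\<forall>t \<in> {0..T}. \<bar>HH k t - G t\<bar> \<le> By * tail (T + 1 + real k))
     \<and> (\<forall>t. \<bar>HH k t\<bar> \<le> By * Mn)" for k
  proof -
    interpret kp: kper T y M "2 * T + 1 + real k"
      by unfold_locales (use Tpos in auto)
    have e: "2 * T + 1 + real k - T = T + 1 + real k" by simp
    show ?thesis unfolding HH_def using kp.J_limit kp.H_G kp.H_bound unfolding e by auto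
  qed
  have f1: "(\<lambda>t. y t * HH k t) integrable_on {0..T}" for k using facts by auto
  have f2: "(\<lambda>t. By * (By * Mn)) integrable_on {0..T}" by (rule integrable_const_ivl)
  have f3: "norm (y t * HH k t) \<le> By * (By * Mn)" if "t \<in> {0..T}" for k t
    unfolding real_norm_def abs_mult using By_bound[OF that] facts[of k]
    by (intro mult_mono) (auto intro: By_nonneg)
  have f4: "(\<lambda>k. y t * HH k t) \<longlonglongrightarrow> y t * G t" if t: "t \<in> {0..T}" for t
  proof (intro tendsto_intros)
    have "(\<lambda>k. HH k t - G t) \<longlonglongrightarrow> 0"
    proof (rule Lim_null_comparison[OF always_eventually])
      show "\<forall>k. norm (HH k t - G t) \<le> By * tail (T + 1 + real k)" using facts t by auto
      show "(\<lambda>k. By * tail (T + 1 + real k)) \<longlonglongrightarrow> 0"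
        using tendsto_mult[OF tendsto_const tail_lim, of By] by simp
    qed
    then show "(\<lambda>k. HH k t) \<longlonglongrightarrow> G t" by (simp add: LIM_zero_iff)
  qed
  note dcr = dominated_convergence[where f="\<lambda>k t. y t * HH k t" and h="\<lambda>t. By * (By * Mn)"
      and g="\<lambda>t. y t * G t" and S="{0..T}", OF f1 f2 f3 f4]
  have "integral {0..T} (\<lambda>t. y t * G t) \<ge> 0"
    using dcr(2) facts by (intro LIMSEQ_le_const[of _ _ 0]) auto
  then show ?thesis using dcr(1) by auto
qed

end


lemma re_lap: "Re (exp (- z * complex_of_real t) * complex_of_real (N t)) = exp (- Re z * t) * cos (Im z * t) * N t"
  by (simp add: Re_exp)

lemma weighted_kernel:
  fixes N :: "real \<Rightarrow> real"
  assumes lap_def: "\<And>z. Re z > 0 \<Longrightarrow>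
        (\<lambda>t. exp (- z * complex_of_real t) * complex_of_real (N t)) absolutely_integrable_on {0<..}"
    and lap_pos: "\<And>z. Re z > 0 \<Longrightarrow> Re (laplace N z) > 0"
    and sig: "\<sigma> > 0" and T: "T > 0" and yc: "continuous_on {0..T} y"
  shows "(\<lambda>t. y t * integral {0<..t} (\<lambda>x. (exp (- \<sigma> * x) * N x) * y (t - x))) integrable_on {0..T}
     \<and> integral {0..T} (\<lambda>t. y t * integral {0<..t} (\<lambda>x. (exp (- \<sigma> * x) * N x) * y (t - x))) \<ge> 0"
proof -
  define M where "M x = exp (- \<sigma> * x) * N x" for x
  have Mre: "M x * cos (\<theta> * x) = (Re \<circ> (\<lambda>t. exp (- Complex \<sigma> \<theta> * complex_of_real t) * complex_of_real (N t))) x" for \<theta> x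
    unfolding M_def o_def re_lap by simp
  have Mabs: "M absolutely_integrable_on {0<..}"
  proof -
    have "(Re \<circ> (\<lambda>t. exp (- Complex \<sigma> 0 * complex_of_real t) * complex_of_real (N t))) absolutely_integrable_on {0<..}"
      by (intro absolutely_integrable_linear lap_def bounded_linear_Re) (use sig in simp)
    moreover have "(Re \<circ> (\<lambda>t. exp (- Complex \<sigma> 0 * complex_of_real t) * complex_of_real (N t))) = M"
    proof
      fix x show "(Re \<circ> (\<lambda>t. exp (- Complex \<sigma> 0 * complex_of_real t) * complex_of_real (N t))) x = M x"
        using Mre[where \<theta>=0, of x] by simp
    qed
    ultimately show ?thesis by simp
  qed
  have Mpos: "integral {0<..} (\<lambda>x. M x * cos (\<theta> * x)) \<ge> 0" for \<theta>
  proof -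
    have i: "(\<lambda>t. exp (- Complex \<sigma> \<theta> * complex_of_real t) * complex_of_real (N t)) integrable_on {0<..}"
      using lap_def[of "Complex \<sigma> \<theta>"] sig unfolding absolutely_integrable_on_def by simp
    have "integral {0<..} (\<lambda>x. M x * cos (\<theta> * x)) = Re (laplace N (Complex \<sigma> \<theta>))"
      unfolding Mre laplace_def by (rule integral_linear[OF i bounded_linear_Re])
    then show ?thesis using lap_pos[of "Complex \<sigma> \<theta>"] sig by simp
  qed
  interpret ks: kset T y M by unfold_locales (use T yc Mabs Mpos in auto)
  show ?thesis using ks.weighted unfolding ks.G_def M_def by simp
qed


lemma prod_abs_int:
  fixes N f :: "real \<Rightarrow> real"
  assumes "N absolutely_integrable_on S" "S \<in> sets lebesgue" "continuous_on S f" "\<And>x. x \<in> S \<Longrightarrow> \<bar>f x\<bar> \<le> C"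
  shows "(\<lambda>x. f x * N x) absolutely_integrable_on S"
proof (rule absolutely_integrable_bounded_measurable_product_real)
  show "f \<in> borel_measurable (lebesgue_on S)" using assms by (intro continuous_imp_measurable_on_sets_lebesgue)
  show "bounded (f ` S)" using assms(4) by (intro boundedI) auto
qed (use assms in auto)

lemma key:
  fixes N :: "real \<Rightarrow> real"
  assumes loc_int: "\<And>T. T > 0 \<Longrightarrow> N absolutely_integrable_on {0<..<T}"
    and lap_def: "\<And>z. Re z > 0 \<Longrightarrow>
        (\<lambda>t. exp (- z * complex_of_real t) * complex_of_real (N t)) absolutely_integrable_on {0<..}"
    and lap_pos: "\<And>z. Re z > 0 \<Longrightarrow> Re (laplace N z) > 0"
    and T: "T > 0" and yc: "continuous_on {0..T} y"
  shows "(\<lambda>t. y t * integral {0<..t} (\<lambda>x. N x * y (t - x))) integrable_on {0..T}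
     \<and> integral {0..T} (\<lambda>t. y t * integral {0<..t} (\<lambda>x. N x * y (t - x))) \<ge> 0"
proof -
  have "compact ((\<lambda>s. \<bar>y s\<bar>) ` {0..T})"
    by (intro compact_continuous_image continuous_intros yc) auto
  then have "bdd_above ((\<lambda>s. \<bar>y s\<bar>) ` {0..T})" by (intro bounded_imp_bdd_above compact_imp_bounded)
  then obtain B where B': "\<forall>s\<in>{0..T}. \<bar>y s\<bar> \<le> B" by (auto simp: bdd_above_def)
  then have B: "\<And>s. s \<in> {0..T} \<Longrightarrow> \<bar>y s\<bar> \<le> B" by blast
  have B0: "B \<ge> 0" using B[of 0] T by force
  have Nsub: "N absolutely_integrable_on {0<..t}" if "t \<le> T" for t
    by (rule set_integrable_subset[OF loc_int[of "T + 1"]]) (use that T in auto)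
  have Nabs_int: "(\<lambda>x. \<bar>N x\<bar>) integrable_on {0<..t}" if "t \<le> T" for t
    using Nsub[OF that] unfolding absolutely_integrable_on_def by auto
  define NT where "NT = integral {0<..T} (\<lambda>x. \<bar>N x\<bar>)"
  define s where "s k = inverse (real (Suc k))" for k
  have s0: "s k > 0" for k unfolding s_def by simp
  have slim: "s \<longlonglongrightarrow> 0" unfolding s_def[abs_def] by (rule LIMSEQ_inverse_real_of_nat)
  define Gs where "Gs k t = integral {0<..t} (\<lambda>x. (exp (- s k * x) * N x) * y (t - x))" for k t
  define G0 where "G0 t = integral {0<..t} (\<lambda>x. N x * y (t - x))" for t
  have ycomp: "continuous_on {0<..t} (\<lambda>x. y (t - x))" if "t \<in> {0..T}" for t
  proof -
    have "continuous_on {0<..t} (\<lambda>x. t - x)" by (intro continuous_intros)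
    moreover have "(\<lambda>x. t - x) ` {0<..t} \<subseteq> {0..T}" using that by auto
    ultimately show ?thesis using continuous_on_compose2[OF yc] by blast
  qed
  have inner: "(\<lambda>k. Gs k t) \<longlonglongrightarrow> G0 t \<and> (\<forall>k. \<bar>Gs k t\<bar> \<le> B * NT)" if t: "t \<in> {0..T}" for t
  proof -
    have f1: "(\<lambda>x. (exp (- s k * x) * N x) * y (t - x)) integrable_on {0<..t}" for k
    proof -
      have "(\<lambda>x. (exp (- s k * x) * y (t - x)) * N x) absolutely_integrable_on {0<..t}"
      proof (rule prod_abs_int[OF Nsub])
        show "continuous_on {0<..t} (\<lambda>x. exp (- s k * x) * y (t - x))"
          by (intro continuous_intros ycomp t)
        fix x assume x: "x \<in> {0<..t}"
        have "exp (- s k * x) \<le> 1" using s0[of k] x by simp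
        then have "\<bar>exp (- s k * x)\<bar> * \<bar>y (t - x)\<bar> \<le> 1 * B"
          using B[of "t - x"] x t by (intro mult_mono) auto
        then show "\<bar>exp (- s k * x) * y (t - x)\<bar> \<le> B" by (simp add: abs_mult)
      qed (use t in auto)
      then show ?thesis unfolding absolutely_integrable_on_def by (simp add: algebra_simps)
    qed
    have f2: "(\<lambda>x. B * \<bar>N x\<bar>) integrable_on {0<..t}" using Nabs_int t by (intro integrable_on_mult_right) auto
    have f3: "norm ((exp (- s k * x) * N x) * y (t - x)) \<le> B * \<bar>N x\<bar>" if x: "x \<in> {0<..t}" for k x
    proof -
      have "exp (- s k * x) \<le> 1" using s0[of k] x by simp
      then have "\<bar>exp (- s k * x)\<bar> * \<bar>y (t - x)\<bar> \<le> 1 * B"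
        using B[of "t - x"] x t by (intro mult_mono) auto
      then have "\<bar>N x\<bar> * (\<bar>exp (- s k * x)\<bar> * \<bar>y (t - x)\<bar>) \<le> \<bar>N x\<bar> * B" by (intro mult_left_mono) auto
      then show ?thesis by (simp add: abs_mult algebra_simps)
    qed
    have f4: "(\<lambda>k. (exp (- s k * x) * N x) * y (t - x)) \<longlonglongrightarrow> (N x * y (t - x))" if "x \<in> {0<..t}" for x
    proof -
      have "(\<lambda>k. (exp (- s k * x) * N x) * y (t - x)) \<longlonglongrightarrow> (exp (- 0 * x) * N x) * y (t - x)"
        by (intro tendsto_intros slim)
      then show ?thesis by simp
    qed
    note dcr = dominated_convergence[where f="\<lambda>k x. (exp (- s k * x) * N x) * y (t - x)" and h="\<lambda>x. B * \<bar>N x\<bar>"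
      and g="\<lambda>x. N x * y (t - x)" and S="{0<..t}", OF f1 f2 f3 f4]
    have bnd: "\<bar>Gs k t\<bar> \<le> B * NT" for k
    proof -
      have "norm (Gs k t) \<le> integral {0<..t} (\<lambda>x. B * \<bar>N x\<bar>)"
        unfolding Gs_def by (rule integral_norm_bound_integral[OF f1 f2 f3])
      also have "\<dots> \<le> integral {0<..T} (\<lambda>x. B * \<bar>N x\<bar>)"
        using t B0 by (intro integral_subset_le f2 integrable_on_mult_right Nabs_int) auto
      also have "\<dots> = B * NT" unfolding NT_def by simp
      finally show ?thesis by simp
    qed
    show ?thesis using dcr(2) bnd unfolding Gs_def G0_def by auto
  qed
  have f1: "(\<lambda>t. y t * Gs k t) integrable_on {0..T}" for k
    using weighted_kernel[OF lap_def lap_pos s0 T yc] unfolding Gs_def by auto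
  have f2: "(\<lambda>t. B * (B * NT)) integrable_on {0..T}" by (rule integrable_const_ivl)
  have f3: "norm (y t * Gs k t) \<le> B * (B * NT)" if "t \<in> {0..T}" for k t
    unfolding real_norm_def abs_mult using B[OF that] inner[OF that] B0 by (intro mult_mono) auto
  have f4: "(\<lambda>k. y t * Gs k t) \<longlonglongrightarrow> y t * G0 t" if "t \<in> {0..T}" for t
    using inner[OF that] by (intro tendsto_intros) auto
  note dcr = dominated_convergence[where f="\<lambda>k t. y t * Gs k t" and h="\<lambda>t. B * (B * NT)"
      and g="\<lambda>t. y t * G0 t" and S="{0..T}", OF f1 f2 f3 f4]
  have pos: "\<forall>k. integral {0..T} (\<lambda>t. y t * Gs k t) \<ge> 0"
    using weighted_kernel[OF lap_def lap_pos s0 T yc] unfolding Gs_def by auto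
  have "integral {0..T} (\<lambda>t. y t * G0 t) \<ge> 0"
    using dcr(2) pos by (intro LIMSEQ_le_const[of _ _ 0]) auto
  then show ?thesis using dcr(1) unfolding G0_def by auto
qed


lemma sub_reflect':
  fixes g :: "real \<Rightarrow> real"
  shows "integral {0..T} (\<lambda>s. g (w - s)) = integral {w - T..w} g"
proof -
  have "integral {0..T} (\<lambda>s. g (w - s)) = integral {- 0..- (-T)} (\<lambda>s. (\<lambda>x. g (w + x)) (- s))" by simp
  also have "\<dots> = integral {-T..0} (\<lambda>x. g (w + x))" using Henstock_Kurzweil_Integration.integral_reflect_real[of 0 "-T" "\<lambda>x. g (w + x)"] by simp
  also have "\<dots> = integral {-T+w..0+w} g" using integral_shift_Icc_real[of "-T" 0 g w] by (simp add: o_def)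
  finally show ?thesis by simp
qed

theorem mainTheorem2:
  fixes N :: "real \<Rightarrow> real"
  assumes loc_int: "\<And>T. T > 0 \<Longrightarrow> N absolutely_integrable_on {0<..<T}"
    and lap_def: "\<And>z. Re z > 0 \<Longrightarrow>
        (\<lambda>t. exp (- z * complex_of_real t) * complex_of_real (N t)) absolutely_integrable_on {0<..}"
    and lap_holo: "laplace N holomorphic_on {z. Re z > 0}"
    and lap_pos: "\<And>z. Re z > 0 \<Longrightarrow> Re (laplace N z) > 0"
  shows "\<forall>(n::nat) (y::real \<Rightarrow> real).
           continuous_on {0..} y \<and> y 0 = 1 \<and>
           (\<forall>t>0. (y has_real_derivative
                     (- (real n ^ 2) * integral {0..t} (\<lambda>s. N (t - s) * y s))) (at t))
           \<longrightarrow> (\<forall>t>0. \<bar>y t\<bar> \<le> 1)"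
proof (rule allI, rule allI, rule impI)
  fix n :: nat and y :: "real \<Rightarrow> real"
  assume "continuous_on {0..} y \<and> y 0 = 1 \<and>
           (\<forall>t>0. (y has_real_derivative (- (real n ^ 2) * integral {0..t} (\<lambda>s. N (t - s) * y s))) (at t))"
  then have yc0: "continuous_on {0..} y" and y0: "y 0 = 1"
    and yd: "\<forall>t>0. (y has_real_derivative (- (real n ^ 2) * integral {0..t} (\<lambda>s. N (t - s) * y s))) (at t)"
    by auto
  show "\<forall>t>0. \<bar>y t\<bar> \<le> 1"
  proof (intro allI impI)
    fix T :: real assume T: "T > 0"
    have yc: "continuous_on {0..T} y" by (rule continuous_on_subset[OF yc0]) auto
    define I where "I x = integral {0..x} (\<lambda>s. N (x - s) * y s)" for x
    define K where "K x = integral {0<..x} (\<lambda>u. N u * y (x - u))" for x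
    have IK: "I x = K x" for x
    proof -
      have "I x = integral {0..x} (\<lambda>s. (\<lambda>u. N u * y (x - u)) (x - s))" unfolding I_def by simp
      also have "\<dots> = integral {x - x..x} (\<lambda>u. N u * y (x - u))" by (rule sub_reflect')
      also have "\<dots> = K x" unfolding K_def
        by (rule integral_spike_set) (auto intro: negligible_subset[of "{0}"])
      finally show ?thesis .
    qed
    have der: "((\<lambda>z. y z ^ 2) has_vector_derivative (2 * y z * (- (real n ^ 2) * I z))) (at z)" if "z \<in> {0<..<T}" for z
    proof -
      have "(y has_real_derivative (- (real n ^ 2) * I z)) (at z)" using yd that unfolding I_def by auto
      from DERIV_power[OF this, of 2]
      have "((\<lambda>z. y z ^ 2) has_real_derivative (2 * y z * (- (real n ^ 2) * I z))) (at z)" by (simp add: algebra_simps)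
      then show ?thesis by (simp add: has_real_derivative_iff_has_vector_derivative)
    qed
    have "((\<lambda>z. 2 * y z * (- (real n ^ 2) * I z)) has_integral (y T ^ 2 - y 0 ^ 2)) {0..T}"
      by (rule fundamental_theorem_of_calculus_interior) (use T der in \<open>auto intro!: continuous_intros yc\<close>)
    then have hi: "((\<lambda>z. (- 2 * real n ^ 2) * (y z * K z)) has_integral (y T ^ 2 - 1)) {0..T}"
      unfolding IK y0 by (simp add: algebra_simps)
    have kk: "(\<lambda>t. y t * K t) integrable_on {0..T} \<and> integral {0..T} (\<lambda>t. y t * K t) \<ge> 0"
      unfolding K_def by (rule key[OF loc_int lap_def lap_pos T yc])
    have "y T ^ 2 - 1 = (- 2 * real n ^ 2) * integral {0..T} (\<lambda>t. y t * K t)"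
      using integral_unique[OF hi] by simp
    also have "\<dots> \<le> 0" using kk by (simp add: mult_nonneg_nonneg)
    finally have "y T ^ 2 \<le> 1" by simp
    then show "\<bar>y T\<bar> \<le> 1" by (simp add: abs_square_le_1)
  qed
qed

end
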